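(* Let $n\ge 3$ and $k\ge 1$. For every function $f\colon V(C_n)\to V(C_{3k})$, we have $\gamma(C_n\otimes_f C_{3k})=kn$; moreover, for every minimum dominating set $D$ of $C_n\otimes_f C_{3k}$ and every $g\in V(C_n)$, $|D\cap (\{g\}\times V(C_{3k}))|=k$.
   Context: $C_m$ is the cycle on $m$ vertices; $\gamma$ denotes the domination number. For graphs $G,H$ and a function $f\colon V(G)\to V(H)$, the Sierpiński product $G\otimes_f H$ is the graph with vertex set $V(G)\times V(H)$ and edges of two types: (type 1) $(g,h)(g,h')$ for every $g\in V(G)$ and every edge $hh'\in E(H)$; (type 2) $(g,f(g'))(g',f(g))$ for every edge $gg'\in E(G)$. *)

theory Defs
  imports Main
begin

definition cycle_adj :: "nat \<Rightarrow> nat \<Rightarrow> nat \<Rightarrow> bool" where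
  "cycle_adj m i j \<longleftrightarrow> i < m \<and> j < m \<and> (j = (i + 1) mod m \<or> i = (j + 1) mod m)"

definition cycle_verts :: "nat \<Rightarrow> nat set" where
  "cycle_verts m = {0..<m}"

definition sierp_verts :: "'a set \<Rightarrow> 'b set \<Rightarrow> ('a \<times> 'b) set" where
  "sierp_verts VG VH = VG \<times> VH"

definition sierp_adj ::
  "('a \<Rightarrow> 'a \<Rightarrow> bool) \<Rightarrow> ('b \<Rightarrow> 'b \<Rightarrow> bool) \<Rightarrow> ('a \<Rightarrow> 'b)
     \<Rightarrow> 'a \<times> 'b \<Rightarrow> 'a \<times> 'b \<Rightarrow> bool" where
  "sierp_adj adjG adjH f x y \<longleftrightarrow>
     (fst x = fst y \<and> adjH (snd x) (snd y)) \<or>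
     (adjG (fst x) (fst y) \<and> snd x = f (fst y) \<and> snd y = f (fst x))"

definition dominating_set :: "'v set \<Rightarrow> ('v \<Rightarrow> 'v \<Rightarrow> bool) \<Rightarrow> 'v set \<Rightarrow> bool" where
  "dominating_set V adj D \<longleftrightarrow> D \<subseteq> V \<and> (\<forall>v\<in>V. v \<in> D \<or> (\<exists>u\<in>D. adj u v))"

definition domination_number :: "'v set \<Rightarrow> ('v \<Rightarrow> 'v \<Rightarrow> bool) \<Rightarrow> nat" where
  "domination_number V adj = Min (card ` {D. dominating_set V adj D})"

definition min_dominating_set :: "'v set \<Rightarrow> ('v \<Rightarrow> 'v \<Rightarrow> bool) \<Rightarrow> 'v set \<Rightarrow> bool" where
  "min_dominating_set V adj D \<longleftrightarrow>
     dominating_set V adj D \<and> card D = domination_number V adj"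

end

theory Submission
  imports Defs
begin

lemma pred_mod:
  fixes x s m :: nat
  assumes "x < m" "s = (x+1) mod m"
  shows "x = (s+m-1) mod m"
proof (cases "x+1 < m")
  case True
  then have "s = x+1" using assms by simp
  then show ?thesis using True by simp
next
  case False
  then have "x+1 = m" using assms by simp
  then have "s = 0" using assms by simp
  then show ?thesis using \<open>x+1 = m\<close> by simp
qed

lemma fiber_lower:
  fixes D :: "(nat \<times> nat) set"
  assumes dom: "dominating_set ({0..<n} \<times> {0..<m}) (sierp_adj (cycle_adj n) (cycle_adj m) f) D"
    and g: "g < n" and mk: "m = 3*k"
  shows "k \<le> card (D \<inter> ({g}\<times>{0..<m}))"
proof -
  define S where "S = snd ` (D \<inter> ({g}\<times>{0..<m}))"
  have inj: "inj_on snd (D \<inter> ({g}\<times>{0..<m}))" by (auto simp: inj_on_def)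
  have cardS: "card S = card (D \<inter> ({g}\<times>{0..<m}))" unfolding S_def using card_image[OF inj] .
  have Ssub: "S \<subseteq> {0..<m}" unfolding S_def by auto
  then have finS: "finite S" using finite_subset by blast
  define T where "T s = {s, (s+1) mod m, (s+m-1) mod m}" for s
  have cov: "{0..<m} \<subseteq> (\<Union>s\<in>S. T s) \<union> {f((g+1) mod n), f((g+n-1) mod n)}"
  proof
    fix h assume h: "h \<in> {0..<m}"
    then have hv: "(g,h) \<in> {0..<n} \<times> {0..<m}" using g by auto
    from dom hv have "(g,h) \<in> D \<or> (\<exists>u\<in>D. sierp_adj (cycle_adj n) (cycle_adj m) f u (g,h))"
      unfolding dominating_set_def by blast
    then show "h \<in> (\<Union>s\<in>S. T s) \<union> {f((g+1) mod n), f((g+n-1) mod n)}"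
    proof
      assume "(g,h) \<in> D"
      then have "h \<in> S" unfolding S_def using h by force
      then show ?thesis unfolding T_def by blast
    next
      assume "\<exists>u\<in>D. sierp_adj (cycle_adj n) (cycle_adj m) f u (g,h)"
      then obtain a b where ab: "(a,b) \<in> D" and adj: "sierp_adj (cycle_adj n) (cycle_adj m) f (a,b) (g,h)"
        by auto
      from adj have "(a = g \<and> cycle_adj m b h) \<or> (cycle_adj n a g \<and> b = f g \<and> h = f a)"
        unfolding sierp_adj_def by simp
      then show ?thesis
      proof
        assume A: "a = g \<and> cycle_adj m b h"
        then have bm: "b < m" "h < m" unfolding cycle_adj_def by auto
        have "b \<in> S" unfolding S_def using A ab bm by force
        moreover have "h \<in> T b"
        proof -
          from A have "h = (b+1) mod m \<or> b = (h+1) mod m" unfolding cycle_adj_def by auto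
          then show ?thesis
          proof
            assume "b = (h+1) mod m"
            then have "h = (b+m-1) mod m" using pred_mod bm by blast
            then show ?thesis unfolding T_def by blast
          qed (auto simp: T_def)
        qed
        ultimately show ?thesis by blast
      next
        assume B: "cycle_adj n a g \<and> b = f g \<and> h = f a"
        then have an: "a < n" unfolding cycle_adj_def by auto
        from B have "a = (g+1) mod n \<or> g = (a+1) mod n" unfolding cycle_adj_def by auto
        then have "a = (g+1) mod n \<or> a = (g+n-1) mod n" using pred_mod an by blast
        then show ?thesis using B by auto
      qed
    qed
  qed
  have finU: "finite ((\<Union>s\<in>S. T s) \<union> {f((g+1) mod n), f((g+n-1) mod n)})"
    using finS by (simp add: T_def)
  have "m \<le> card ((\<Union>s\<in>S. T s) \<union> {f((g+1) mod n), f((g+n-1) mod n)})"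
    using card_mono[OF finU cov] by simp
  also have "\<dots> \<le> card (\<Union>s\<in>S. T s) + card {f((g+1) mod n), f((g+n-1) mod n)}"
    by (rule card_Un_le)
  also have "\<dots> \<le> card (\<Union>s\<in>S. T s) + 2" by (simp add: card_insert_if)
  also have "card (\<Union>s\<in>S. T s) \<le> (\<Sum>s\<in>S. card (T s))" by (rule card_UN_le[OF finS])
  also have "\<dots> \<le> (\<Sum>s\<in>S. 3)"
    by (rule sum_mono) (simp add: T_def card_insert_if)
  finally have "m \<le> 3 * card S + 2" by simp
  then show ?thesis using mk cardS by simp
qed

lemma card_split:
  fixes D :: "(nat \<times> nat) set"
  assumes "D \<subseteq> {0..<n} \<times> {0..<m}"
  shows "card D = (\<Sum>g\<in>{0..<n}. card (D \<inter> ({g}\<times>{0..<m})))"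
proof -
  have "D = (\<Union>g\<in>{0..<n}. D \<inter> ({g}\<times>{0..<m}))" using assms by auto
  then have "card D = card (\<Union>g\<in>{0..<n}. D \<inter> ({g}\<times>{0..<m}))" by simp
  also have "\<dots> = (\<Sum>g\<in>{0..<n}. card (D \<inter> ({g}\<times>{0..<m})))"
    by (rule card_UN_disjoint) auto
  finally show ?thesis .
qed

lemma card_res: "card {h::nat. h < 3*k \<and> h mod 3 = 1} = k"
proof -
  have "{h::nat. h < 3*k \<and> h mod 3 = 1} = (\<lambda>i. 3*i+1) ` {0..<k}"
  proof (rule set_eqI, rule iffI)
    fix h assume "h \<in> {h::nat. h < 3*k \<and> h mod 3 = 1}"
    then have hk: "h < 3*k" and h1: "h mod 3 = 1" by auto
    have e: "h = 3*(h div 3) + 1" using h1 div_mod_decomp[of h 3] by linarith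
    with hk have "h div 3 < k" by linarith
    then show "h \<in> (\<lambda>i. 3*i+1) ` {0..<k}" using e by (intro rev_image_eqI[of "h div 3"]) auto
  qed auto
  moreover have "inj_on (\<lambda>i::nat. 3*i+1) {0..<k}" by (auto simp: inj_on_def)
  ultimately show ?thesis by (simp add: card_image)
qed

theorem mainTheorem11:
  fixes n k :: nat and f :: "nat \<Rightarrow> nat"
  assumes "n \<ge> 3" and "k \<ge> 1"
    and "\<forall>g\<in>cycle_verts n. f g \<in> cycle_verts (3 * k)"
  shows "domination_number (sierp_verts (cycle_verts n) (cycle_verts (3 * k)))
           (sierp_adj (cycle_adj n) (cycle_adj (3 * k)) f) = k * n
       \<and> (\<forall>D. min_dominating_set (sierp_verts (cycle_verts n) (cycle_verts (3 * k)))
               (sierp_adj (cycle_adj n) (cycle_adj (3 * k)) f) D \<longrightarrow>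
             (\<forall>g\<in>cycle_verts n. card (D \<inter> ({g} \<times> cycle_verts (3 * k))) = k))"
proof -
  define m where "m = 3*k"
  define V where "V = {0..<n} \<times> {0..<m}"
  define adj where "adj = sierp_adj (cycle_adj n) (cycle_adj m) f"
  have lower: "k*n \<le> card D" if d: "dominating_set V adj D" for D
  proof -
    have "D \<subseteq> V" using d unfolding dominating_set_def by auto
    then have "card D = (\<Sum>g\<in>{0..<n}. card (D \<inter> ({g}\<times>{0..<m})))"
      unfolding V_def by (rule card_split)
    also have "\<dots> \<ge> (\<Sum>g\<in>{0..<n}. k)"
      by (rule sum_mono) (use fiber_lower d m_def in \<open>auto simp: V_def adj_def\<close>)
    finally show ?thesis by (simp add: mult.commute)
  qed
  define D0 where "D0 = {0..<n} \<times> {h. h < m \<and> h mod 3 = 1}"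
  have D0dom: "dominating_set V adj D0"
    unfolding dominating_set_def
  proof
    show "D0 \<subseteq> V" unfolding D0_def V_def by auto
    show "\<forall>v\<in>V. v \<in> D0 \<or> (\<exists>u\<in>D0. adj u v)"
    proof
      fix v assume "v \<in> V"
      then obtain g h where v: "v = (g,h)" "g < n" "h < m" unfolding V_def by auto
      consider "h mod 3 = 1" | "h mod 3 = 0" | "h mod 3 = 2" by linarith
      then show "v \<in> D0 \<or> (\<exists>u\<in>D0. adj u v)"
      proof cases
        case 1 then show ?thesis using v unfolding D0_def by auto
      next
        case 2
        have hq: "h = 3*(h div 3)" using 2 div_mod_decomp[of h 3] by linarith
        then have "h div 3 < k" using v m_def by linarith
        then have "h+1 < m" using hq m_def by linarith
        moreover have "(h+1) mod 3 = 1"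
        proof -
          have "(h+1) mod 3 = (1 + 3*(h div 3)) mod 3" using hq by (simp add: add.commute)
          also have "\<dots> = 1" by simp
          finally show ?thesis .
        qed
        ultimately have "h+1 < m" "(h+1) mod 3 = 1" by auto
        then have "(g,h+1) \<in> D0" "adj (g,h+1) v" using v
          unfolding D0_def adj_def sierp_adj_def cycle_adj_def by auto
        then show ?thesis by blast
      next
        case 3
        have hq: "h = 3*(h div 3) + 2" using 3 div_mod_decomp[of h 3] by linarith
        then have "h-1 = 3*(h div 3) + 1" by linarith
        then have "(h-1) mod 3 = (1 + 3*(h div 3)) mod 3" by (simp add: add.commute)
        then have "(h-1) mod 3 = 1" by simp
        then have "h \<ge> 2" "(h-1) mod 3 = 1" using hq by linarith+
        then have "(g,h-1) \<in> D0" "adj (g,h-1) v" using v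
          unfolding D0_def adj_def sierp_adj_def cycle_adj_def by auto
        then show ?thesis by blast
      qed
    qed
  qed
  have cD0: "card D0 = k*n"
    unfolding D0_def m_def using card_res[of k] by (simp add: card_cartesian_product)
  have finset: "finite (card ` {D. dominating_set V adj D})"
  proof -
    have "{D. dominating_set V adj D} \<subseteq> Pow V" unfolding dominating_set_def by auto
    moreover have "finite V" unfolding V_def by simp
    ultimately show ?thesis by (meson finite_Pow_iff finite_imageI finite_subset)
  qed
  have dn: "domination_number V adj = k*n"
  proof -
    have ne: "card ` {D. dominating_set V adj D} \<noteq> {}" using D0dom by auto
    from Min_in[OF finset ne] obtain D where "dominating_set V adj D"
      "Min (card ` {D. dominating_set V adj D}) = card D" by auto
    then have "Min (card ` {D. dominating_set V adj D}) \<ge> k*n" using lower by auto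
    moreover have "Min (card ` {D. dominating_set V adj D}) \<le> k*n"
      using Min_le[OF finset] D0dom cD0 by (metis (mono_tags, lifting) image_eqI mem_Collect_eq)
    ultimately show ?thesis unfolding domination_number_def by simp
  qed
  have part2: "card (D \<inter> ({g} \<times> {0..<m})) = k"
    if md: "min_dominating_set V adj D" and g: "g < n" for D g
  proof -
    have d: "dominating_set V adj D" and cd: "card D = k*n"
      using md dn unfolding min_dominating_set_def by auto
    have ge: "\<forall>x\<in>{0..<n}. k \<le> card (D \<inter> ({x}\<times>{0..<m}))"
      using fiber_lower d m_def by (auto simp: V_def adj_def)
    have "D \<subseteq> V" using d unfolding dominating_set_def by auto
    then have cs: "card D = (\<Sum>g\<in>{0..<n}. card (D \<inter> ({g}\<times>{0..<m})))"
      unfolding V_def by (rule card_split)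
    show ?thesis
    proof (rule ccontr)
      assume "card (D \<inter> ({g} \<times> {0..<m})) \<noteq> k"
      then have "k < card (D \<inter> ({g} \<times> {0..<m}))" using ge g by force
      then have "(\<Sum>x\<in>{0..<n}. k) < (\<Sum>x\<in>{0..<n}. card (D \<inter> ({x}\<times>{0..<m})))"
        using ge g by (intro sum_strict_mono_ex1) auto
      then show False using cs cd by (simp add: mult.commute)
    qed
  qed
  show ?thesis
    using dn part2 unfolding V_def adj_def m_def sierp_verts_def cycle_verts_def by auto
qed

end
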